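(* Let $M$ be a matroid on a finite set $E$, let $\mathcal{C}$ be a family of non-spanning circuits of $M$, and let $N$ be the free erection of $M$. Suppose every cyclic flat of $M$ is a union of circuits in $\mathcal{C}$. Then every cyclic flat of $N$ is a union of circuits in $\mathcal{C}$.
   Context: A cyclic set is a union of circuits; $\emptyset$ counts as cyclic. $M$ is the truncation of $N$ if $r_N(E)=r_M(E)+1$ and $r_M(X)=\min\{r_N(X),r_M(E)\}$ for all $X$. The free erection of $M$ is the maximum, in the weak order ($M_1\preceq M_2$ iff every independent set of $M_1$ is independent in $M_2$), of the set consisting of $M$ and all $N$ whose truncation is $M$. *)

theory Defs
  imports Main
begin

definition matroid :: "'a set \<Rightarrow> 'a set set \<Rightarrow> bool" where
  "matroid E I \<longleftrightarrow> finite E \<and> (\<forall>X\<in>I. X \<subseteq> E) \<and> {} \<in> I \<and>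
     (\<forall>X Y. X \<in> I \<and> Y \<subseteq> X \<longrightarrow> Y \<in> I) \<and>
     (\<forall>X Y. X \<in> I \<and> Y \<in> I \<and> card X < card Y \<longrightarrow> (\<exists>y\<in>Y - X. insert y X \<in> I))"

definition rk :: "'a set set \<Rightarrow> 'a set \<Rightarrow> nat" where
  "rk I X = Max {card Y | Y. Y \<subseteq> X \<and> Y \<in> I}"

definition circuit :: "'a set \<Rightarrow> 'a set set \<Rightarrow> 'a set \<Rightarrow> bool" where
  "circuit E I C \<longleftrightarrow> C \<subseteq> E \<and> C \<notin> I \<and> (\<forall>x\<in>C. C - {x} \<in> I)"

definition flat :: "'a set \<Rightarrow> 'a set set \<Rightarrow> 'a set \<Rightarrow> bool" where
  "flat E I F \<longleftrightarrow> F \<subseteq> E \<and> (\<forall>x\<in>E - F. rk I (insert x F) > rk I F)"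

definition cyclic :: "'a set \<Rightarrow> 'a set set \<Rightarrow> 'a set \<Rightarrow> bool" where
  "cyclic E I X \<longleftrightarrow> (\<exists>\<D>. (\<forall>C\<in>\<D>. circuit E I C) \<and> X = \<Union>\<D>)"

definition cyclic_flat :: "'a set \<Rightarrow> 'a set set \<Rightarrow> 'a set \<Rightarrow> bool" where
  "cyclic_flat E I F \<longleftrightarrow> cyclic E I F \<and> flat E I F"

definition spanning :: "'a set \<Rightarrow> 'a set set \<Rightarrow> 'a set \<Rightarrow> bool" where
  "spanning E I X \<longleftrightarrow> X \<subseteq> E \<and> rk I X = rk I E"

definition truncation_of :: "'a set \<Rightarrow> 'a set set \<Rightarrow> 'a set set \<Rightarrow> bool" where
  "truncation_of E IM IN \<longleftrightarrow> rk IN E = rk IM E + 1 \<and>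
     (\<forall>X. X \<subseteq> E \<longrightarrow> rk IM X = min (rk IN X) (rk IM E))"

definition weak_le :: "'a set set \<Rightarrow> 'a set set \<Rightarrow> bool" where
  "weak_le I1 I2 \<longleftrightarrow> I1 \<subseteq> I2"

definition free_erection :: "'a set \<Rightarrow> 'a set set \<Rightarrow> 'a set set \<Rightarrow> bool" where
  "free_erection E IM IN \<longleftrightarrow>
     matroid E IN \<and> (IN = IM \<or> truncation_of E IM IN) \<and>
     (\<forall>IN'. matroid E IN' \<and> (IN' = IM \<or> truncation_of E IM IN') \<longrightarrow> weak_le IN' IN)"

end

theory Submission
  imports Defs
begin


lemma m_fin: "matroid E I \<Longrightarrow> finite E" by (simp add: matroid_def)
lemma m_sub: "matroid E I \<Longrightarrow> X \<in> I \<Longrightarrow> X \<subseteq> E" by (simp add: matroid_def)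
lemma m_empty: "matroid E I \<Longrightarrow> {} \<in> I" by (simp add: matroid_def)
lemma m_down: "matroid E I \<Longrightarrow> X \<in> I \<Longrightarrow> Y \<subseteq> X \<Longrightarrow> Y \<in> I" unfolding matroid_def by blast
lemma m_aug: "matroid E I \<Longrightarrow> X \<in> I \<Longrightarrow> Y \<in> I \<Longrightarrow> card X < card Y \<Longrightarrow> \<exists>y\<in>Y - X. insert y X \<in> I"
  unfolding matroid_def by blast

lemma rk_set_fin:
  assumes "finite X" shows "finite {card Y | Y. Y \<subseteq> X \<and> Y \<in> I}"
proof -
  have "{card Y | Y. Y \<subseteq> X \<and> Y \<in> I} \<subseteq> card ` Pow X" by auto
  thus ?thesis using assms finite_subset by blast
qed

lemma rk_ge:
  assumes "matroid E I" "X \<subseteq> E" "Y \<subseteq> X" "Y \<in> I" shows "card Y \<le> rk I X"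
proof -
  have "finite X" using assms m_fin finite_subset by blast
  thus ?thesis unfolding rk_def using assms by (intro Max_ge rk_set_fin) auto
qed

lemma rk_wit:
  assumes "matroid E I" "X \<subseteq> E" shows "\<exists>Y. Y \<subseteq> X \<and> Y \<in> I \<and> card Y = rk I X"
proof -
  have "finite X" using assms m_fin finite_subset by blast
  moreover have "{card Y | Y. Y \<subseteq> X \<and> Y \<in> I} \<noteq> {}" using m_empty[OF assms(1)] by blast
  ultimately have "rk I X \<in> {card Y | Y. Y \<subseteq> X \<and> Y \<in> I}" unfolding rk_def
    by (intro Max_in rk_set_fin)
  thus ?thesis by auto
qed

lemma rk_le_card:
  assumes "matroid E I" "X \<subseteq> E" shows "rk I X \<le> card X"
proof -
  obtain Y where Y: "Y \<subseteq> X" "card Y = rk I X" using rk_wit[OF assms] by blast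
  have "finite X" using assms m_fin finite_subset by blast
  hence "card Y \<le> card X" using Y(1) by (rule card_mono)
  thus ?thesis using Y(2) by simp
qed

lemma rk_mono:
  assumes "matroid E I" "X' \<subseteq> E" "X \<subseteq> X'" shows "rk I X \<le> rk I X'"
proof -
  obtain Y where Y: "Y \<subseteq> X" "Y \<in> I" "card Y = rk I X" using rk_wit[OF assms(1) order_trans[OF assms(3) assms(2)]] by blast
  have "Y \<subseteq> X'" using Y(1) assms(3) by blast
  hence "card Y \<le> rk I X'" using rk_ge[OF assms(1,2) _ Y(2)] by blast
  thus ?thesis using Y(3) by simp
qed

lemma indep_le_rkE:
  assumes "matroid E I" "Y \<in> I" shows "card Y \<le> rk I E"
  using rk_ge[OF assms(1) order_refl m_sub[OF assms] assms(2)] .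

lemma rk_eq_card_indep:
  assumes "matroid E I" "X \<subseteq> E" "rk I X = card X" shows "X \<in> I"
proof -
  obtain Y where Y: "Y \<subseteq> X" "Y \<in> I" "card Y = rk I X" using rk_wit[OF assms(1,2)] by blast
  have "finite X" using assms m_fin finite_subset by blast
  hence "Y = X" using Y assms(3) card_subset_eq by metis
  thus ?thesis using Y by simp
qed

lemma indep_rk:
  assumes "matroid E I" "X \<in> I" shows "rk I X = card X"
  using rk_ge[OF assms(1) m_sub[OF assms] order_refl assms(2)] rk_le_card[OF assms(1) m_sub[OF assms]] by simp

lemma extend_basis:
  assumes "matroid E I" "Y \<in> I" "Y \<subseteq> X" "X \<subseteq> E"
  shows "\<exists>Z. Y \<subseteq> Z \<and> Z \<subseteq> X \<and> Z \<in> I \<and> card Z = rk I X"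
proof -
  have fX: "finite X" using assms m_fin finite_subset by blast
  let ?P = "\<lambda>Z. Y \<subseteq> Z \<and> Z \<subseteq> X \<and> Z \<in> I"
  have "\<forall>Z. ?P Z \<longrightarrow> card Z < Suc (card X)" using fX by (auto simp: less_Suc_eq_le card_mono)
  then obtain Z where Z: "?P Z" "\<forall>Z'. ?P Z' \<longrightarrow> card Z' \<le> card Z"
    using Lattices_Big.ex_has_greatest_nat[of ?P Y card "Suc (card X)"] assms by blast
  have le: "card Z \<le> rk I X" using rk_ge[OF assms(1,4)] Z by blast
  have "\<not> card Z < rk I X"
  proof
    assume lt: "card Z < rk I X"
    obtain W where W: "W \<subseteq> X" "W \<in> I" "card W = rk I X" using rk_wit[OF assms(1,4)] by blast
    have "card Z < card W" using lt W by simp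
    then obtain w where "w \<in> W - Z" "insert w Z \<in> I" using m_aug[OF assms(1) _ W(2)] Z(1) by blast
    moreover have "finite Z" using Z fX finite_subset by blast
    ultimately have "?P (insert w Z)" "card (insert w Z) > card Z" using Z(1) W(1) by auto
    thus False using Z(2) by (meson not_le)
  qed
  thus ?thesis using le Z by (intro exI[of _ Z]) auto
qed

lemma circuit_in:
  assumes "matroid E I" "Y \<in> I" "insert e Y \<notin> I" "insert e Y \<subseteq> E"
  shows "\<exists>C. circuit E I C \<and> e \<in> C \<and> C \<subseteq> insert e Y"
proof -
  define P where "P = (\<lambda>C. C \<subseteq> insert e Y \<and> C \<notin> I)"
  have P0: "P (insert e Y)" using assms(3) unfolding P_def by simp
  obtain C where C1: "P C" and C2: "\<And>C'. P C' \<Longrightarrow> card C \<le> card C'"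
    using ex_has_least_nat[of P, OF P0, of card] by blast
  have Csub: "C \<subseteq> insert e Y" and CnI: "C \<notin> I" using C1 unfolding P_def by auto
  have fin: "finite (insert e Y)" using assms(4) m_fin[OF assms(1)] by (rule finite_subset)
  have fC: "finite C" using Csub fin by (rule finite_subset)
  have all: "\<forall>x\<in>C. C - {x} \<in> I"
  proof
    fix x assume "x \<in> C"
    hence lt: "card (C - {x}) < card C" using fC by (meson card_Diff1_less)
    show "C - {x} \<in> I"
    proof (rule ccontr)
      assume "C - {x} \<notin> I"
      hence "P (C - {x})" using Csub unfolding P_def by blast
      hence "card C \<le> card (C - {x})" by (rule C2)
      thus False using lt by simp
    qed
  qed
  have eC: "e \<in> C"
  proof (rule ccontr)
    assume "e \<notin> C" hence "C \<subseteq> Y" using Csub by blast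
    hence "C \<in> I" by (rule m_down[OF assms(1,2)])
    thus False using CnI by simp
  qed
  have "C \<subseteq> E" using Csub assms(4) by (rule order_trans)
  hence "circuit E I C" unfolding circuit_def using CnI all by simp
  thus ?thesis using eC Csub by blast
qed

lemma flat_insert_indep:
  assumes "matroid E I" "flat E I F" "Y \<in> I" "Y \<subseteq> F" "e \<in> E - F"
  shows "insert e Y \<in> I"
proof -
  have FE: "F \<subseteq> E" using assms(2) unfolding flat_def by simp
  obtain Z where Z1: "Y \<subseteq> Z" and Z2: "Z \<subseteq> F" and Z3: "Z \<in> I" and Z4: "card Z = rk I F"
    using extend_basis[OF assms(1,3,4) FE] by blast
  have gt: "rk I (insert e F) > rk I F" using assms(2,5) unfolding flat_def by blast
  have eFE: "insert e F \<subseteq> E" using FE assms(5) by blast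
  obtain W where W1: "W \<subseteq> insert e F" and W2: "W \<in> I" and W3: "card W = rk I (insert e F)"
    using rk_wit[OF assms(1) eFE] by blast
  have "card Z < card W" using Z4 W3 gt by simp
  then obtain w where w1: "w \<in> W - Z" and w2: "insert w Z \<in> I" using m_aug[OF assms(1) Z3 W2] by blast
  have fZ: "finite Z" using Z2 FE m_fin[OF assms(1)] by (meson finite_subset)
  have "w = e"
  proof (rule ccontr)
    assume "w \<noteq> e" hence "insert w Z \<subseteq> F" using w1 W1 Z2 by blast
    hence "card (insert w Z) \<le> rk I F" using rk_ge[OF assms(1) FE _ w2] by blast
    moreover have "card (insert w Z) = Suc (card Z)" using w1 fZ by simp
    ultimately show False using Z4 by simp
  qed
  hence "insert e Y \<subseteq> insert w Z" using Z1 by blast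
  thus ?thesis by (rule m_down[OF assms(1) w2])
qed

lemma flat_ne_rk:
  assumes "matroid E I" "flat E I F" "F \<noteq> E" shows "rk I F < rk I E"
proof -
  have FE: "F \<subseteq> E" using assms(2) unfolding flat_def by simp
  then obtain e where e: "e \<in> E - F" using assms(3) by blast
  hence "rk I (insert e F) > rk I F" using assms(2) unfolding flat_def by blast
  moreover have "insert e F \<subseteq> E" using FE e by blast
  hence "rk I (insert e F) \<le> rk I E" using rk_mono[OF assms(1) order_refl] by blast
  ultimately show ?thesis by simp
qed



lemma competitor:
  assumes mN: "matroid E N" and rE: "rk N E = Suc r" and fl: "flat E N F" and rF: "rk N F = r"
    and xF: "x \<in> F"
    and small: "\<And>C. circuit E N C \<Longrightarrow> x \<in> C \<Longrightarrow> C \<subseteq> F \<Longrightarrow> r < card C"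
  defines "S \<equiv> {insert x Y | Y. Y \<subseteq> F - {x} \<and> Y \<in> N \<and> card Y = r}"
  shows "matroid E (N \<union> S) \<and> (\<forall>X. X \<subseteq> E \<longrightarrow> min (rk (N \<union> S) X) r = min (rk N X) r)
         \<and> rk (N \<union> S) E = Suc r"
proof -
  have FE: "F \<subseteq> E" using fl unfolding flat_def by simp
  have fE: "finite E" using m_fin[OF mN] .
  have Sd: "\<exists>Y. W = insert x Y \<and> Y \<subseteq> F - {x} \<and> Y \<in> N \<and> card Y = r" if "W \<in> S" for W
    using that unfolding S_def by blast
  have Scard: "card W = Suc r" if WS: "W \<in> S" for W
  proof -
    obtain Y where Y: "W = insert x Y" "Y \<subseteq> F - {x}" "Y \<in> N" "card Y = r" using Sd[OF WS] by blast
    have "finite Y" using Y(2) FE fE by (meson Diff_subset finite_subset order_trans)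
    moreover have "x \<notin> Y" using Y(2) by blast
    ultimately show ?thesis using Y(1,4) by simp
  qed
  have SE: "W \<subseteq> E" if "W \<in> S" for W
    using Sd[OF that] FE xF by blast
  have Ncard: "card W \<le> Suc r" if "W \<in> N" for W
    using indep_le_rkE[OF mN that] rE by simp
  let ?I = "N \<union> S"
  have down: "Z \<in> ?I" if XI: "X \<in> ?I" and ZX: "Z \<subseteq> X" for X Z
  proof (cases "X \<in> N")
    case True thus ?thesis using m_down[OF mN True ZX] by simp
  next
    case False
    hence XS: "X \<in> S" using XI by simp
    then obtain Y where Y: "X = insert x Y" "Y \<subseteq> F - {x}" "Y \<in> N" "card Y = r" using Sd by blast
    show ?thesis
    proof (cases "Z = X")
      case True thus ?thesis using XI by simp
    next
      case ZneX: False
      show ?thesis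
      proof (cases "x \<in> Z")
        case False
        hence "Z \<subseteq> Y" using ZX Y(1) by blast
        thus ?thesis using m_down[OF mN Y(3)] by simp
      next
        case True
        have Z'N: "Z - {x} \<in> N" using m_down[OF mN Y(3)] ZX Y(1) by blast
        have fX: "finite X" using SE[OF XS] fE by (rule finite_subset)
        have "Z \<subset> X" using ZX ZneX by blast
        hence "card Z < card X" by (rule psubset_card_mono[OF fX])
        hence cZ: "card Z \<le> r" using Scard[OF XS] by simp
        have "Z \<in> N"
        proof (rule ccontr)
          assume nZ: "Z \<notin> N"
          have ZE: "insert x (Z - {x}) \<subseteq> E" using ZX SE[OF XS] True by blast
          have "insert x (Z - {x}) = Z" using True by blast
          then obtain C where C: "circuit E N C" "x \<in> C" "C \<subseteq> Z"
            using circuit_in[OF mN Z'N _ ZE] nZ by auto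
          have "C \<subseteq> F" using C(3) ZX Y(1,2) xF by blast
          hence "r < card C" using small C by blast
          moreover have "card C \<le> card Z" using C(3) fX ZX by (metis card_mono finite_subset)
          ultimately show False using cZ by simp
        qed
        thus ?thesis by simp
      qed
    qed
  qed
  have aug: "\<exists>y\<in>Y - X. insert y X \<in> ?I" if XI: "X \<in> ?I" and YI: "Y \<in> ?I" and lt: "card X < card Y" for X Y
  proof (cases "X \<in> N")
    case XN: True
    show ?thesis
    proof (cases "Y \<in> N")
      case True thus ?thesis using m_aug[OF mN XN True lt] by blast
    next
      case False
      hence YS: "Y \<in> S" using YI by simp
      then obtain Y0 where Y0: "Y = insert x Y0" "Y0 \<subseteq> F - {x}" "Y0 \<in> N" "card Y0 = r" using Sd by blast
      have cX: "card X \<le> r" using lt Scard[OF YS] by simp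
      have fX: "finite X" using m_sub[OF mN XN] fE by (rule finite_subset)
      show ?thesis
      proof (cases "card X < r")
        case True
        then obtain y where "y \<in> Y0 - X" "insert y X \<in> N" using m_aug[OF mN XN Y0(3)] Y0(4) by auto
        thus ?thesis using Y0(1) by blast
      next
        case False
        hence cXr: "card X = r" using cX by simp
        show ?thesis
        proof (cases "X \<subseteq> F")
          case XF: True
          show ?thesis
          proof (cases "x \<in> X")
            case False
            hence "insert x X \<in> S" unfolding S_def using XF XN cXr by blast
            thus ?thesis using Y0(1) False by blast
          next
            case True
            have X'N: "X - {x} \<in> N" using m_down[OF mN XN] by blast
            have cX': "card (X - {x}) < card Y0" using True fX cXr Y0(4)
              by (metis card_Diff1_less)
            then obtain y where y: "y \<in> Y0 - (X - {x})" "insert y (X - {x}) \<in> N"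
              using m_aug[OF mN X'N Y0(3)] by blast
            have yx: "y \<noteq> x" using y(1) Y0(2) by blast
            hence yX: "y \<notin> X" using y(1) by blast
            have c1: "card (X - {x}) = r - 1" using True cXr by (simp add: card_Diff_singleton)
            have "card X > 0" using True fX card_gt_0_iff by blast
            hence r1: "r \<ge> 1" using cXr by simp
            have "y \<notin> X - {x}" using y(1) by blast
            hence "card (insert y (X - {x})) = Suc (r - 1)" using c1 fX by simp
            hence "card (insert y (X - {x})) = r" using r1 by simp
            moreover have "insert y (X - {x}) \<subseteq> F - {x}" using XF yx y(1) Y0(2) by blast
            ultimately have "insert x (insert y (X - {x})) \<in> S" unfolding S_def using y(2) by blast
            moreover have "insert x (insert y (X - {x})) = insert y X" using True by blast
            ultimately have yI: "insert y X \<in> ?I" by simp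
            have "y \<in> Y - X" using y(1) yX Y0(1) by blast
            thus ?thesis using yI by blast
          qed
        next
          case False
          then obtain z where z: "z \<in> X" "z \<notin> F" by blast
          have zE: "z \<in> E - F" using z m_sub[OF mN XN] by blast
          have Y0F: "Y0 \<subseteq> F" using Y0(2) by blast
          have zY: "insert z Y0 \<in> N" using flat_insert_indep[OF mN fl Y0(3) Y0F zE] .
          have fY0: "finite Y0" using Y0F FE fE by (meson finite_subset)
          have "z \<notin> Y0" using z(2) Y0F by blast
          hence "card (insert z Y0) = Suc r" using fY0 Y0(4) by simp
          hence "card X < card (insert z Y0)" using cXr by simp
          then obtain y where y: "y \<in> insert z Y0 - X" "insert y X \<in> N" using m_aug[OF mN XN zY] by blast
          hence "y \<in> Y - X" using z(1) Y0(1) by blast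
          thus ?thesis using y(2) by blast
        qed
      qed
    qed
  next
    case False
    hence "X \<in> S" using XI by simp
    hence "card X = Suc r" by (rule Scard)
    moreover have "card Y \<le> Suc r"
    proof (cases "Y \<in> N")
      case True thus ?thesis by (rule Ncard)
    next
      case False thus ?thesis using YI Scard by simp
    qed
    ultimately show ?thesis using lt by simp
  qed
  have mI: "matroid E ?I"
    unfolding matroid_def
  proof (intro conjI allI impI)
    show "finite E" by (rule fE)
    show "\<forall>X\<in>?I. X \<subseteq> E" using m_sub[OF mN] SE by blast
    show "{} \<in> ?I" using m_empty[OF mN] by simp
    show "Y \<in> ?I" if "X \<in> ?I \<and> Y \<subseteq> X" for X Y using down that by blast
    show "\<exists>y\<in>Y - X. insert y X \<in> ?I" if "X \<in> ?I \<and> Y \<in> ?I \<and> card X < card Y" for X Y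
      using aug that by blast
  qed
  have rkeq: "min (rk ?I X) r = min (rk N X) r" if XE: "X \<subseteq> E" for X
  proof -
    obtain W where W: "W \<subseteq> X" "W \<in> N" "card W = rk N X" using rk_wit[OF mN XE] by blast
    have WI: "W \<in> ?I" using W(2) by simp
    have le: "rk N X \<le> rk ?I X" using rk_ge[OF mI XE W(1) WI] W(3) by simp
    obtain W' where W': "W' \<subseteq> X" "W' \<in> ?I" "card W' = rk ?I X" using rk_wit[OF mI XE] by blast
    show ?thesis
    proof (cases "W' \<in> N")
      case True
      hence "rk ?I X \<le> rk N X" using rk_ge[OF mN XE W'(1) True] W'(3) by simp
      thus ?thesis using le by simp
    next
      case False
      hence WS: "W' \<in> S" using W' by simp
      then obtain Y where Y: "W' = insert x Y" "Y \<subseteq> F - {x}" "Y \<in> N" "card Y = r" using Sd by blast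
      have YX: "Y \<subseteq> X" using Y(1) W'(1) by blast
      have "r \<le> rk N X" using rk_ge[OF mN XE YX Y(3)] Y(4) by simp
      moreover have "rk ?I X = Suc r" using Scard[OF WS] W'(3) by simp
      ultimately show ?thesis by simp
    qed
  qed
  have "rk ?I E = Suc r"
  proof -
    obtain W where W: "W \<subseteq> E" "W \<in> N" "card W = rk N E" using rk_wit[OF mN order_refl] by blast
    have WI: "W \<in> ?I" using W(2) by simp
    have "rk N E \<le> rk ?I E" using rk_ge[OF mI order_refl W(1) WI] W(3) by simp
    moreover obtain W' where W': "W' \<subseteq> E" "W' \<in> ?I" "card W' = rk ?I E" using rk_wit[OF mI order_refl] by blast
    moreover have "card W' \<le> Suc r"
    proof (cases "W' \<in> N")
      case True thus ?thesis by (rule Ncard)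
    next
      case False thus ?thesis using W'(2) Scard by simp
    qed
    ultimately show ?thesis using rE by linarith
  qed
  note R = this
  have "\<forall>X. X \<subseteq> E \<longrightarrow> min (rk (N \<union> S) X) r = min (rk N X) r" using rkeq by simp
  with mI R show ?thesis by (simp only: simp_thms)
qed



lemma cyc_flat_between:
  assumes mM: "matroid E M" and mN: "matroid E N" and MN: "M \<subseteq> N"
    and tr: "\<And>X. X \<subseteq> E \<Longrightarrow> rk M X = min (rk N X) r"
    and fl: "flat E N F" and cM: "circuit E M C" and CF: "C \<subseteq> F" and cC: "card C \<le> r"
  shows "\<exists>G. cyclic_flat E M G \<and> C \<subseteq> G \<and> G \<subseteq> F"
proof -
  have CE: "C \<subseteq> E" and CnM: "C \<notin> M" and Cm: "\<forall>c\<in>C. C - {c} \<in> M"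
    using cM unfolding circuit_def by auto
  have fE: "finite E" by (rule m_fin[OF mM])
  have fC: "finite C" using CE fE by (rule finite_subset)
  have "C \<noteq> {}" using CnM m_empty[OF mM] by blast
  then obtain c where cC': "c \<in> C" by blast
  define Y where "Y = C - {c}"
  define k where "k = card Y"
  have YM: "Y \<in> M" unfolding Y_def using Cm cC' by blast
  have YN: "Y \<in> N" using YM MN by blast
  have YC: "Y \<subseteq> C" unfolding Y_def by blast
  have cCk: "card C = Suc k" unfolding k_def Y_def using cC' fC
    by (metis card_Suc_Diff1)
  have rkC: "rk M C = k"
  proof -
    have "k \<le> rk M C" unfolding k_def using rk_ge[OF mM CE YC YM] .
    moreover have "rk M C \<le> Suc k" using rk_le_card[OF mM CE] cCk by simp
    moreover have "rk M C \<noteq> Suc k"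
    proof
      assume "rk M C = Suc k"
      hence "C \<in> M" using rk_eq_card_indep[OF mM CE] cCk by simp
      thus False using CnM by simp
    qed
    ultimately show ?thesis by simp
  qed
  define K where "K = {e \<in> E. rk M (insert e C) = k}"
  have KE: "K \<subseteq> E" unfolding K_def by blast
  have K1: "insert e Y \<notin> M" if eK: "e \<in> K" and eY: "e \<notin> Y" for e
  proof
    assume iM: "insert e Y \<in> M"
    have sub: "insert e Y \<subseteq> insert e C" using YC by blast
    have sE: "insert e C \<subseteq> E" using eK KE CE by blast
    have "card (insert e Y) \<le> rk M (insert e C)" by (rule rk_ge[OF mM sE sub iM])
    moreover have "card (insert e Y) = Suc k" unfolding k_def using eY YC fC
      by (meson card_insert_disjoint finite_subset)
    ultimately show False using eK unfolding K_def by simp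
  qed
  have K2: "card W \<le> k" if WK: "W \<subseteq> K" and WM: "W \<in> M" for W
  proof (rule ccontr)
    assume "\<not> card W \<le> k"
    hence "card Y < card W" unfolding k_def by simp
    then obtain w where w: "w \<in> W - Y" "insert w Y \<in> M" using m_aug[OF mM YM WM] by blast
    have "w \<in> K" using w(1) WK by blast
    thus False using K1 w by blast
  qed
  have CK: "C \<subseteq> K"
  proof
    fix e assume eC: "e \<in> C"
    hence "insert e C = C" by blast
    thus "e \<in> K" unfolding K_def using rkC eC CE by auto
  qed
  define G where "G = \<Union>{C'. circuit E M C' \<and> C' \<subseteq> K}"
  have "C \<in> {C'. circuit E M C' \<and> C' \<subseteq> K}" using cM CK by simp
  hence CG: "C \<subseteq> G" unfolding G_def by (rule Union_upper)
  have GK: "G \<subseteq> K" unfolding G_def by (rule Union_least) simp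
  have GE: "G \<subseteq> E" using GK KE by blast
  have YG: "Y \<subseteq> G" using YC CG by blast
  have rkG: "rk M G = k"
  proof -
    have "k \<le> rk M G" unfolding k_def by (rule rk_ge[OF mM GE YG YM])
    moreover obtain W where W: "W \<subseteq> G" "W \<in> M" "card W = rk M G" using rk_wit[OF mM GE] by blast
    moreover have "W \<subseteq> K" using W(1) GK by blast
    ultimately show ?thesis using K2[OF \<open>W \<subseteq> K\<close> W(2)] by linarith
  qed
  have kr: "k < r" using cC cCk by simp
  have KF: "K \<subseteq> F"
  proof
    fix e assume eK: "e \<in> K"
    show "e \<in> F"
    proof (rule ccontr)
      assume eF: "e \<notin> F"
      have eE: "e \<in> E" using eK KE by blast
      have sE: "insert e C \<subseteq> E" using eE CE by blast
      have "rk M (insert e C) = k" using eK unfolding K_def by simp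
      hence "min (rk N (insert e C)) r = k" using tr[OF sE] by simp
      hence rN: "rk N (insert e C) = k" using kr by linarith
      have YF: "Y \<subseteq> F" using YC CF by blast
      have iN: "insert e Y \<in> N" using flat_insert_indep[OF mN fl YN YF] eE eF by blast
      have sub: "insert e Y \<subseteq> insert e C" using YC by blast
      have "card (insert e Y) \<le> rk N (insert e C)" by (rule rk_ge[OF mN sE sub iN])
      moreover have "e \<notin> Y" using eF YF by blast
      hence "card (insert e Y) = Suc k" unfolding k_def using YC fC
        by (meson card_insert_disjoint finite_subset)
      ultimately show False using rN by simp
    qed
  qed
  have flG: "flat E M G" unfolding flat_def
  proof (intro conjI ballI)
    show "G \<subseteq> E" by (rule GE)
    fix e assume eEG: "e \<in> E - G"
    show "rk M G < rk M (insert e G)"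
    proof (rule ccontr)
      assume "\<not> rk M G < rk M (insert e G)"
      hence le: "rk M (insert e G) \<le> k" using rkG by simp
      have eY: "e \<notin> Y" using eEG YG by blast
      have sE: "insert e G \<subseteq> E" using eEG GE by blast
      have niM: "insert e Y \<notin> M"
      proof
        assume iM: "insert e Y \<in> M"
        have "insert e Y \<subseteq> insert e G" using YG by blast
        hence "card (insert e Y) \<le> rk M (insert e G)" using rk_ge[OF mM sE _ iM] by blast
        moreover have "card (insert e Y) = Suc k" unfolding k_def using eY YC fC
          by (meson card_insert_disjoint finite_subset)
        ultimately show False using le by simp
      qed
      have iYE: "insert e Y \<subseteq> E" using eEG YC CE by blast
      obtain C' where C': "circuit E M C'" "e \<in> C'" "C' \<subseteq> insert e Y"
        using circuit_in[OF mM YM niM iYE] by blast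
      have sE2: "insert e C \<subseteq> E" using eEG CE by blast
      have "rk M C \<le> rk M (insert e C)" using rk_mono[OF mM sE2] by blast
      moreover have "rk M (insert e C) \<le> rk M (insert e G)" using rk_mono[OF mM sE] CG by blast
      ultimately have "rk M (insert e C) = k" using rkC le by simp
      hence "e \<in> K" unfolding K_def using eEG by blast
      hence "insert e Y \<subseteq> K" using YC CK by blast
      hence "C' \<subseteq> K" using C'(3) by (rule order_trans[rotated])
      hence "C' \<in> {C'. circuit E M C' \<and> C' \<subseteq> K}" using C'(1) by simp
      hence "C' \<subseteq> G" unfolding G_def by (rule Union_upper)
      thus False using C'(2) eEG by blast
    qed
  qed
  have cyG: "cyclic E M G" unfolding cyclic_def G_def
    by (rule exI[where x="{C'. circuit E M C' \<and> C' \<subseteq> K}"]) simp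
  have "cyclic_flat E M G" unfolding cyclic_flat_def using flG cyG by simp
  moreover have "G \<subseteq> F" using GK KF by (rule order_trans)
  ultimately show ?thesis using CG by blast
qed



theorem lemma3p5:
  fixes E :: "'a set" and M N :: "'a set set" and \<C> :: "'a set set"
  assumes "matroid E M"
    and "\<forall>C\<in>\<C>. circuit E M C \<and> \<not> spanning E M C"
    and "free_erection E M N"
    and "\<forall>F. cyclic_flat E M F \<longrightarrow> (\<exists>\<D>\<subseteq>\<C>. F = \<Union>\<D>)"
  shows "\<forall>F. cyclic_flat E N F \<longrightarrow> (\<exists>\<D>\<subseteq>\<C>. F = \<Union>\<D>)"
proof (intro allI impI)
  fix F assume cfN: "cyclic_flat E N F"
  have mM: "matroid E M" by (rule assms(1))
  have mN: "matroid E N" using assms(3) unfolding free_erection_def by blast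
  have maxN: "\<And>I'. matroid E I' \<Longrightarrow> I' = M \<or> truncation_of E M I' \<Longrightarrow> I' \<subseteq> N"
    using assms(3) unfolding free_erection_def weak_le_def by blast
  have MN: "M \<subseteq> N" using maxN[OF mM] by simp
  have flN: "flat E N F" and cyN: "cyclic E N F" using cfN unfolding cyclic_flat_def by auto
  have FE: "F \<subseteq> E" using flN unfolding flat_def by simp
  have fE: "finite E" by (rule m_fin[OF mM])
  have "N = M \<or> truncation_of E M N" using assms(3) unfolding free_erection_def by blast
  thus "\<exists>\<D>\<subseteq>\<C>. F = \<Union>\<D>"
  proof
    assume "N = M"
    hence "cyclic_flat E M F" using cfN by simp
    thus ?thesis by (rule assms(4)[rule_format])
  next
    assume trN: "truncation_of E M N"
    define r where "r = rk M E"
    have T1: "rk N E = rk M E + 1" and T2: "\<forall>X. X \<subseteq> E \<longrightarrow> rk M X = min (rk N X) (rk M E)"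
      using trN unfolding truncation_of_def by blast+
    have rE: "rk N E = Suc r" using T1 unfolding r_def by simp
    have tr: "rk M X = min (rk N X) r" if XE: "X \<subseteq> E" for X
      using T2 XE unfolding r_def by blast
    have factb: "X \<in> M" if XN: "X \<in> N" and cX: "card X \<le> r" for X
    proof -
      have XE: "X \<subseteq> E" by (rule m_sub[OF mN XN])
      have "rk N X = card X" by (rule indep_rk[OF mN XN])
      hence "rk M X = card X" using tr[OF XE] cX by simp
      thus ?thesis by (rule rk_eq_card_indep[OF mM XE])
    qed
    obtain \<D>N where DN: "\<forall>C\<in>\<D>N. circuit E N C" "F = \<Union>\<D>N" using cyN unfolding cyclic_def by blast
    show ?thesis
    proof (cases "F = E")
      case True
      have "cyclic E M E" unfolding cyclic_def
      proof (rule exI[where x="{C. circuit E M C}"], intro conjI)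
        show "\<forall>C\<in>{C. circuit E M C}. circuit E M C" by simp
        show "E = \<Union>{C. circuit E M C}"
        proof
          show "\<Union>{C. circuit E M C} \<subseteq> E" unfolding circuit_def by blast
          show "E \<subseteq> \<Union>{C. circuit E M C}"
          proof
            fix x assume xE: "x \<in> E"
            then obtain C where C: "C \<in> \<D>N" "x \<in> C" using DN True by blast
            have cC: "circuit E N C" using C(1) DN(1) by blast
            have CE: "C \<subseteq> E" and CnN: "C \<notin> N" and C1: "C - {x} \<in> N"
              using cC C(2) unfolding circuit_def by auto
            have sub: "C - {x} \<subseteq> E" using CE by blast
            obtain Z where Z: "C - {x} \<subseteq> Z" "Z \<subseteq> E" "Z \<in> N" "card Z = rk N E"
              using extend_basis[OF mN C1 sub order_refl] by blast
            have xZ: "x \<notin> Z"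
            proof
              assume "x \<in> Z"
              hence "C \<subseteq> Z" using Z(1) by blast
              thus False using m_down[OF mN Z(3)] CnN by blast
            qed
            have ZE: "Z \<subseteq> E - {x}" using Z(2) xZ by blast
            have Ex: "E - {x} \<subseteq> E" by blast
            have "card Z \<le> rk N (E - {x})" by (rule rk_ge[OF mN Ex ZE Z(3)])
            hence "rk M (E - {x}) = r" using tr[OF Ex] rE Z(4) by simp
            then obtain Y where Y: "Y \<subseteq> E - {x}" "Y \<in> M" "card Y = r"
              using rk_wit[OF mM Ex] by metis
            have fY: "finite Y" using Y(1) fE by (meson finite_subset Ex order_trans)
            have "x \<notin> Y" using Y(1) by blast
            hence cY: "card (insert x Y) = Suc r" using fY Y(3) by simp
            have niM: "insert x Y \<notin> M"
            proof
              assume "insert x Y \<in> M"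
              hence "card (insert x Y) \<le> rk M E" by (rule indep_le_rkE[OF mM])
              thus False using cY r_def by simp
            qed
            have iE: "insert x Y \<subseteq> E" using Y(1) xE by blast
            obtain C' where "circuit E M C'" "x \<in> C'" using circuit_in[OF mM Y(2) niM iE] by blast
            thus "x \<in> \<Union>{C. circuit E M C}" by blast
          qed
        qed
      qed
      moreover have "flat E M E" unfolding flat_def by simp
      ultimately have "cyclic_flat E M E" unfolding cyclic_flat_def by simp
      thus ?thesis using assms(4) True by blast
    next
      case FnE: False
      have rkF: "rk N F \<le> r" using flat_ne_rk[OF mN flN FnE] rE by simp
      have xclaim: "\<exists>C\<in>\<C>. x \<in> C \<and> C \<subseteq> F" if xF: "x \<in> F" for x
      proof -
        obtain C0 where C0: "C0 \<in> \<D>N" "x \<in> C0" using DN xF by blast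
        have cC0: "circuit E N C0" using C0(1) DN(1) by blast
        have C0F: "C0 \<subseteq> F" using C0(1) DN(2) by blast
        have C0E: "C0 \<subseteq> E" and C0nN: "C0 \<notin> N" and C01: "C0 - {x} \<in> N"
          using cC0 C0(2) unfolding circuit_def by auto
        have fC0: "finite C0" using C0E fE by (rule finite_subset)
        have C0xF: "C0 - {x} \<subseteq> F" using C0F by blast
        have cC0x: "card (C0 - {x}) \<le> rk N F" by (rule rk_ge[OF mN FE C0xF C01])
        have cC0eq: "card C0 = Suc (card (C0 - {x}))" using fC0 C0(2) by (metis card_Suc_Diff1)
        have small: "\<exists>C. circuit E N C \<and> x \<in> C \<and> C \<subseteq> F \<and> card C \<le> r"
        proof (rule ccontr)
          assume ns: "\<not> (\<exists>C. circuit E N C \<and> x \<in> C \<and> C \<subseteq> F \<and> card C \<le> r)"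
          have smallc: "r < card C" if "circuit E N C" "x \<in> C" "C \<subseteq> F" for C
            using ns that by (meson not_le)
          have "r < card C0" by (rule smallc[OF cC0 C0(2) C0F])
          hence crx: "card (C0 - {x}) = r" and rF: "rk N F = r" using cC0eq cC0x rkF by simp_all
          define S where "S = {insert x Y | Y. Y \<subseteq> F - {x} \<and> Y \<in> N \<and> card Y = r}"
          have comp: "matroid E (N \<union> S) \<and> (\<forall>X. X \<subseteq> E \<longrightarrow> min (rk (N \<union> S) X) r = min (rk N X) r)
             \<and> rk (N \<union> S) E = Suc r"
            unfolding S_def by (rule competitor[OF mN rE flN rF xF smallc])
          have "truncation_of E M (N \<union> S)" unfolding truncation_of_def
          proof (intro conjI allI impI)
            have "rk (N \<union> S) E = Suc r" using comp by blast
            thus "rk (N \<union> S) E = rk M E + 1" unfolding r_def by simp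
            fix X assume XE: "X \<subseteq> E"
            have "min (rk (N \<union> S) X) r = min (rk N X) r" using comp XE by blast
            hence "rk M X = min (rk (N \<union> S) X) r" using tr[OF XE] by simp
            thus "rk M X = min (rk (N \<union> S) X) (rk M E)" unfolding r_def by simp
          qed
          hence "N \<union> S \<subseteq> N" using maxN comp by blast
          moreover have "C0 - {x} \<subseteq> F - {x}" using C0F by blast
          hence "insert x (C0 - {x}) \<in> S" unfolding S_def using C01 crx by blast
          moreover have "insert x (C0 - {x}) = C0" using C0(2) by blast
          ultimately have "C0 \<in> N" by auto
          thus False using C0nN by simp
        qed
        then obtain C where C: "circuit E N C" "x \<in> C" "C \<subseteq> F" "card C \<le> r" by blast
        have CE: "C \<subseteq> E" and CnN: "C \<notin> N" and Cm: "\<forall>c\<in>C. C - {c} \<in> N"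
          using C(1) unfolding circuit_def by auto
        have fC: "finite C" using CE fE by (rule finite_subset)
        have "\<forall>c\<in>C. C - {c} \<in> M"
        proof
          fix c assume "c \<in> C"
          hence "C - {c} \<in> N" using Cm by blast
          moreover have "card (C - {c}) \<le> r" using C(4) fC by (meson card_Diff1_le order_trans)
          ultimately show "C - {c} \<in> M" by (rule factb)
        qed
        moreover have "C \<notin> M" using CnN MN by blast
        ultimately have cM: "circuit E M C" unfolding circuit_def using CE by simp
        obtain G where G: "cyclic_flat E M G" "C \<subseteq> G" "G \<subseteq> F"
          using cyc_flat_between[OF mM mN MN tr flN cM C(3,4)] by blast
        obtain \<D> where D: "\<D> \<subseteq> \<C>" "G = \<Union>\<D>" using assms(4) G(1) by blast
        have "x \<in> G" using G(2) C(2) by blast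
        then obtain D0 where "D0 \<in> \<D>" "x \<in> D0" using D(2) by blast
        moreover have "D0 \<subseteq> F" using \<open>D0 \<in> \<D>\<close> D(2) G(3) by blast
        ultimately show ?thesis using D(1) by blast
      qed
      show ?thesis
      proof (rule exI[where x="{C \<in> \<C>. C \<subseteq> F}"], intro conjI)
        show "{C \<in> \<C>. C \<subseteq> F} \<subseteq> \<C>" by blast
        show "F = \<Union>{C \<in> \<C>. C \<subseteq> F}"
        proof
          show "\<Union>{C \<in> \<C>. C \<subseteq> F} \<subseteq> F" by blast
          show "F \<subseteq> \<Union>{C \<in> \<C>. C \<subseteq> F}" using xclaim by blast
        qed
      qed
    qed
  qed
qed

end
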